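(* Let $\Gamma$ be a group, $S$ a $\Gamma$-graded semigroup and $A$ a unital ring, and give the contracted semigroup ring $A[S]$ the grading induced by that of $S$. Then (1) $S$ is a strongly $\Gamma$-graded semigroup if and only if $A[S]$ is a strongly $\Gamma$-graded ring; and (2) there is a ring isomorphism $A[S\#\Gamma]\cong A[S]\#\Gamma$, given by $sP_\alpha\mapsto (1s)P_\alpha$ on basis elements.
   Context: Semigroups have a zero; $S$ is $\Gamma$-graded via $\deg:S\setminus\{0\}\to\Gamma$ with $\deg(st)=\deg(s)\deg(t)$ whenever $st\neq0$, $S_\alpha=\deg^{-1}(\alpha)\cup\{0\}$; strongly graded semigroup: $S_\alpha S_\beta=S_{\alpha\beta}$. $A[S]$ is the semigroup ring $AS$ modulo the ideal generated by the zero of $S$; elements are finite sums $\sum a^{(s)}s$ over $s\in S\setminus\{0\}$. Its induced grading: $A[S]_\alpha$ consists of the sums supported in $S_\alpha$. A $\Gamma$-graded ring $B=\bigoplus_\alpha B_\alpha$ ($B_\alpha B_\beta\subseteq B_{\alpha\beta}$) is strongly graded if $B_\alpha B_\beta=B_{\alpha\beta}$ (additive span of products). The semigroup smash product $S\#\Gamma=\{sP_\alpha:s\in S\setminus\{0\},\alpha\in\Gamma\}\cup\{0\}$ has product $(sP_\alpha)(tP_\beta)=stP_\beta$ if $st\neq0$ and $t\in S_{\alpha\beta^{-1}}$, else $0$. For a $\Gamma$-graded ring $B$, the ring smash product $B\#\Gamma$ consists of finite formal sums $\sum_\alpha b^{(\alpha)}P_\alpha$ ($b^{(\alpha)}\in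 B$) with componentwise addition and multiplication determined by $(aP_\alpha)(bP_\beta)=a\,b_{\alpha\beta^{-1}}P_\beta$, where $b_{\gamma}$ is the homogeneous component of $b$ of degree $\gamma$. *)

theory Defs
  imports Main
begin

text \<open>The group Gamma is a type 'g of class group_add (not necessarily commutative),
  written additively: the paper's alpha beta is alpha + beta and alpha beta^-1 is alpha - beta.\<close>

definition graded_semigroup :: "('s::{semigroup_mult,mult_zero} \<Rightarrow> 'g::group_add) \<Rightarrow> bool" where
  "graded_semigroup deg \<longleftrightarrow> (\<forall>s t. s * t \<noteq> 0 \<longrightarrow> deg (s * t) = deg s + deg t)"

definition sg_comp :: "('s::{semigroup_mult,mult_zero} \<Rightarrow> 'g) \<Rightarrow> 'g \<Rightarrow> 's set" where
  "sg_comp deg \<alpha> = {s. s \<noteq> 0 \<and> deg s = \<alpha>} \<union> {0}"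

definition set_mult :: "'s::times set \<Rightarrow> 's set \<Rightarrow> 's set" where
  "set_mult X Y = {x * y | x y. x \<in> X \<and> y \<in> Y}"

definition strongly_graded_semigroup :: "('s::{semigroup_mult,mult_zero} \<Rightarrow> 'g::group_add) \<Rightarrow> bool" where
  "strongly_graded_semigroup deg \<longleftrightarrow>
     (\<forall>\<alpha> \<beta>. set_mult (sg_comp deg \<alpha>) (sg_comp deg \<beta>) = sg_comp deg (\<alpha> + \<beta>))"

text \<open>An element sum a^(s) s (s ranging over nonzero elements) is represented by the
  finitely supported coefficient function s |-> a^(s), vanishing outside Sc - {z}.\<close>
definition csr_carrier :: "'x set \<Rightarrow> 'x \<Rightarrow> ('x \<Rightarrow> 'a::zero) set" where
  "csr_carrier Sc z = {f. finite {x. f x \<noteq> 0} \<and> (\<forall>x. f x \<noteq> 0 \<longrightarrow> x \<in> Sc \<and> x \<noteq> z)}"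

definition csr_add :: "('x \<Rightarrow> 'a::plus) \<Rightarrow> ('x \<Rightarrow> 'a) \<Rightarrow> 'x \<Rightarrow> 'a" where
  "csr_add f g = (\<lambda>x. f x + g x)"

definition csr_mult :: "('x \<Rightarrow> 'x \<Rightarrow> 'x) \<Rightarrow> 'x \<Rightarrow> ('x \<Rightarrow> 'a::ring_1) \<Rightarrow> ('x \<Rightarrow> 'a) \<Rightarrow> 'x \<Rightarrow> 'a" where
  "csr_mult m z f g = (\<lambda>u. if u = z then 0 else
      (\<Sum>(s,t)\<in>{(s,t). f s \<noteq> 0 \<and> g t \<noteq> 0 \<and> m s t = u}. f s * g t))"

definition csr_basis :: "'x \<Rightarrow> 'x \<Rightarrow> 'a::ring_1" where
  "csr_basis x = (\<lambda>y. if y = x then 1 else 0)"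

abbreviation AS_carrier :: "('s::{semigroup_mult,mult_zero} \<Rightarrow> 'a::ring_1) set" where
  "AS_carrier \<equiv> csr_carrier UNIV 0"

abbreviation AS_mult :: "('s::{semigroup_mult,mult_zero} \<Rightarrow> 'a::ring_1) \<Rightarrow> ('s \<Rightarrow> 'a) \<Rightarrow> 's \<Rightarrow> 'a" where
  "AS_mult \<equiv> csr_mult (*) 0"

definition AS_comp :: "('s::{semigroup_mult,mult_zero} \<Rightarrow> 'g) \<Rightarrow> 'g \<Rightarrow> ('s \<Rightarrow> 'a::ring_1) set" where
  "AS_comp deg \<alpha> = {f \<in> AS_carrier. \<forall>s. f s \<noteq> 0 \<longrightarrow> s \<in> sg_comp deg \<alpha>}"

definition AS_hcomp :: "('s::{semigroup_mult,mult_zero} \<Rightarrow> 'g) \<Rightarrow> 'g \<Rightarrow> ('s \<Rightarrow> 'a::ring_1) \<Rightarrow> 's \<Rightarrow> 'a" where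
  "AS_hcomp deg \<gamma> b = (\<lambda>s. if s \<noteq> 0 \<and> deg s = \<gamma> then b s else 0)"

inductive_set add_span :: "('b \<Rightarrow> 'b \<Rightarrow> 'b) \<Rightarrow> ('b \<Rightarrow> 'b \<Rightarrow> 'b) \<Rightarrow> 'b \<Rightarrow> 'b set \<Rightarrow> 'b set \<Rightarrow> 'b set"
  for add mult zero X Y where
  zero: "zero \<in> add_span add mult zero X Y"
| prod: "x \<in> X \<Longrightarrow> y \<in> Y \<Longrightarrow> mult x y \<in> add_span add mult zero X Y"
| add: "a \<in> add_span add mult zero X Y \<Longrightarrow> b \<in> add_span add mult zero X Y \<Longrightarrow> add a b \<in> add_span add mult zero X Y"

definition strongly_graded_ring :: "('b \<Rightarrow> 'b \<Rightarrow> 'b) \<Rightarrow> ('b \<Rightarrow> 'b \<Rightarrow> 'b) \<Rightarrow> 'b \<Rightarrow> ('g::group_add \<Rightarrow> 'b set) \<Rightarrow> bool" where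
  "strongly_graded_ring add mult zero H \<longleftrightarrow>
     (\<forall>\<alpha> \<beta>. add_span add mult zero (H \<alpha>) (H \<beta>) = H (\<alpha> + \<beta>))"

text \<open>s P_alpha is represented by Some (s, alpha); the zero by None.\<close>
definition smash_sg_carrier :: "('s::{semigroup_mult,mult_zero} \<times> 'g) option set" where
  "smash_sg_carrier = {None} \<union> {Some (s, \<alpha>) | s \<alpha>. s \<noteq> 0}"

definition smash_sg_mult :: "('s::{semigroup_mult,mult_zero} \<Rightarrow> 'g::group_add) \<Rightarrow>
    ('s \<times> 'g) option \<Rightarrow> ('s \<times> 'g) option \<Rightarrow> ('s \<times> 'g) option" where
  "smash_sg_mult deg x y = (case x of None \<Rightarrow> None | Some (s, \<alpha>) \<Rightarrow>
     (case y of None \<Rightarrow> None | Some (t, \<beta>) \<Rightarrow>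
        (if s * t \<noteq> 0 \<and> t \<in> sg_comp deg (\<alpha> - \<beta>) then Some (s * t, \<beta>) else None)))"

text \<open>sum_alpha b^(alpha) P_alpha is represented by alpha |-> b^(alpha).\<close>
definition rsmash_carrier :: "('s::{semigroup_mult,mult_zero} \<Rightarrow> 'a::ring_1) set \<Rightarrow> ('g \<Rightarrow> 's \<Rightarrow> 'a) set" where
  "rsmash_carrier Bc = {x. finite {\<alpha>. x \<alpha> \<noteq> (\<lambda>_. 0)} \<and> (\<forall>\<alpha>. x \<alpha> \<in> Bc)}"

definition rsmash_add :: "('g \<Rightarrow> 's \<Rightarrow> 'a::ring_1) \<Rightarrow> ('g \<Rightarrow> 's \<Rightarrow> 'a) \<Rightarrow> 'g \<Rightarrow> 's \<Rightarrow> 'a" where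
  "rsmash_add x y = (\<lambda>\<alpha> s. x \<alpha> s + y \<alpha> s)"

text \<open>(a P_alpha)(b P_beta) = a b_(alpha beta^-1) P_beta, extended bilinearly; multB is the
  product of B and hc gamma b the homogeneous component b_gamma.\<close>
definition rsmash_mult :: "(('s \<Rightarrow> 'a::ring_1) \<Rightarrow> ('s \<Rightarrow> 'a) \<Rightarrow> 's \<Rightarrow> 'a) \<Rightarrow>
    ('g::group_add \<Rightarrow> ('s \<Rightarrow> 'a) \<Rightarrow> 's \<Rightarrow> 'a) \<Rightarrow>
    ('g \<Rightarrow> 's \<Rightarrow> 'a) \<Rightarrow> ('g \<Rightarrow> 's \<Rightarrow> 'a) \<Rightarrow> 'g \<Rightarrow> 's \<Rightarrow> 'a" where
  "rsmash_mult multB hc x y = (\<lambda>\<beta> u. \<Sum>\<alpha>\<in>{\<alpha>. x \<alpha> \<noteq> (\<lambda>_. 0)}. multB (x \<alpha>) (hc (\<alpha> - \<beta>) (y \<beta>)) u)"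

definition rsmash_single :: "'g \<Rightarrow> ('s \<Rightarrow> 'a::zero) \<Rightarrow> 'g \<Rightarrow> 's \<Rightarrow> 'a" where
  "rsmash_single \<alpha> b = (\<lambda>\<beta>. if \<beta> = \<alpha> then b else (\<lambda>_. 0))"

section \<open>Ring isomorphisms (rings not assumed unital)\<close>

definition ring_iso_betw :: "('r \<Rightarrow> 'q) \<Rightarrow> 'r set \<Rightarrow> ('r \<Rightarrow> 'r \<Rightarrow> 'r) \<Rightarrow> ('r \<Rightarrow> 'r \<Rightarrow> 'r)
    \<Rightarrow> 'q set \<Rightarrow> ('q \<Rightarrow> 'q \<Rightarrow> 'q) \<Rightarrow> ('q \<Rightarrow> 'q \<Rightarrow> 'q) \<Rightarrow> bool" where
  "ring_iso_betw \<phi> R addR multR Q addQ multQ \<longleftrightarrow>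
     bij_betw \<phi> R Q \<and>
     (\<forall>x\<in>R. \<forall>y\<in>R. \<phi> (addR x y) = addQ (\<phi> x) (\<phi> y) \<and> \<phi> (multR x y) = multQ (\<phi> x) (\<phi> y))"

end

theory Submission
  imports Defs
begin


lemma csr_mult_nz:
  assumes h: "csr_mult m z f g u \<noteq> 0"
  shows "u \<noteq> z \<and> (\<exists>s t. f s \<noteq> 0 \<and> g t \<noteq> 0 \<and> m s t = u)"
proof -
  have uz: "u \<noteq> z" using h by (auto simp: csr_mult_def)
  have "{(s,t). f s \<noteq> 0 \<and> g t \<noteq> 0 \<and> m s t = u} \<noteq> {}"
  proof
    assume e: "{(s,t). f s \<noteq> 0 \<and> g t \<noteq> 0 \<and> m s t = u} = {}"
    have "csr_mult m z f g u = (\<Sum>(s,t)\<in>{(s,t). f s \<noteq> 0 \<and> g t \<noteq> 0 \<and> m s t = u}. f s * g t)"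
      using uz by (simp add: csr_mult_def)
    also have "\<dots> = 0" by (simp only: e sum.empty)
    finally show False using h by simp
  qed
  then show ?thesis using uz by blast
qed

lemma csr_mult_eq:
  assumes "u \<noteq> z" "finite F" "finite G" "\<And>s. f s \<noteq> 0 \<Longrightarrow> s \<in> F" "\<And>t. g t \<noteq> 0 \<Longrightarrow> t \<in> G"
  shows "csr_mult m z f g u = (\<Sum>s\<in>F. \<Sum>t\<in>G. if m s t = u then f s * g t else (0::'a::ring_1))"
proof -
  have "csr_mult m z f g u = (\<Sum>(s,t)\<in>{(s,t). f s \<noteq> 0 \<and> g t \<noteq> 0 \<and> m s t = u}. f s * g t)"
    using assms(1) by (simp add: csr_mult_def)
  also have "\<dots> = (\<Sum>(s,t)\<in>F\<times>G. if m s t = u then f s * g t else 0)"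
    apply (rule sum.mono_neutral_cong_left)
    using assms by (auto split: if_splits)
  also have "\<dots> = (\<Sum>s\<in>F. \<Sum>t\<in>G. if m s t = u then f s * g t else 0)"
    by (simp add: sum.cartesian_product)
  finally show ?thesis .
qed

lemma AS_comp_mult:
  assumes graded: "graded_semigroup deg"
    and f: "f \<in> AS_comp deg \<alpha>" and g: "g \<in> AS_comp deg \<beta>"
  shows "(AS_mult f g :: 's::{semigroup_mult,mult_zero} \<Rightarrow> 'a::ring_1) \<in> AS_comp deg (\<alpha> + \<beta>)"
proof -
  have ff: "finite {s. f s \<noteq> 0}" and f0: "\<And>s. f s \<noteq> 0 \<Longrightarrow> s \<noteq> 0 \<and> deg s = \<alpha>"
    using f by (auto simp: AS_comp_def csr_carrier_def sg_comp_def)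
  have fg: "finite {s. g s \<noteq> 0}" and g0: "\<And>s. g s \<noteq> 0 \<Longrightarrow> s \<noteq> 0 \<and> deg s = \<beta>"
    using g by (auto simp: AS_comp_def csr_carrier_def sg_comp_def)
  have sub: "{u. AS_mult f g u \<noteq> 0} \<subseteq> (\<lambda>(s,t). s * t) ` ({s. f s \<noteq> 0} \<times> {t. g t \<noteq> 0})"
  proof
    fix u assume "u \<in> {u. AS_mult f g u \<noteq> 0}"
    then obtain s t where "f s \<noteq> 0" "g t \<noteq> 0" "s * t = u" using csr_mult_nz[of "(*)" 0 f g u] by auto
    then show "u \<in> (\<lambda>(s,t). s * t) ` ({s. f s \<noteq> 0} \<times> {t. g t \<noteq> 0})" by force
  qed
  have fin: "finite {u. AS_mult f g u \<noteq> 0}"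
    by (rule finite_subset[OF sub]) (use ff fg in auto)
  have "AS_mult f g u \<noteq> 0 \<Longrightarrow> u \<noteq> 0 \<and> deg u = \<alpha> + \<beta>" for u
  proof -
    assume "AS_mult f g u \<noteq> 0"
    then obtain s t where h: "u \<noteq> 0" "f s \<noteq> 0" "g t \<noteq> 0" "s * t = u" using csr_mult_nz[of "(*)" 0 f g u] by auto
    then show ?thesis using graded f0 g0 unfolding graded_semigroup_def by auto
  qed
  then show ?thesis using fin by (auto simp: AS_comp_def csr_carrier_def sg_comp_def)
qed

lemma span_sub:
  assumes graded: "graded_semigroup deg"
  shows "x \<in> add_span csr_add AS_mult (\<lambda>_. 0) (AS_comp deg \<alpha>) (AS_comp deg \<beta>) \<Longrightarrow>
     (x :: 's::{semigroup_mult,mult_zero} \<Rightarrow> 'a::ring_1) \<in> AS_comp deg (\<alpha> + \<beta>)"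
proof (induction rule: add_span.induct)
  case zero
  then show ?case by (simp add: AS_comp_def csr_carrier_def)
next
  case (prod x y)
  then show ?case using AS_comp_mult[OF graded] by blast
next
  case (add a b)
  have "{s. csr_add a b s \<noteq> 0} \<subseteq> {s. a s \<noteq> 0} \<union> {s. b s \<noteq> 0}" by (auto simp: csr_add_def)
  moreover have "finite ({s. a s \<noteq> 0} \<union> {s. b s \<noteq> 0})" using add.IH by (auto simp: AS_comp_def csr_carrier_def)
  ultimately have "finite {s. csr_add a b s \<noteq> 0}" by (rule finite_subset)
  then show ?case using add.IH apply (auto simp: AS_comp_def csr_carrier_def csr_add_def)
    by (metis add.left_neutral)+
qed

lemma span_witness:
  shows "x \<in> add_span csr_add AS_mult (\<lambda>_. 0) (AS_comp deg \<alpha>) (AS_comp deg \<beta>) \<Longrightarrow>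
     (x :: 's::{semigroup_mult,mult_zero} \<Rightarrow> 'a::ring_1) v \<noteq> 0 \<Longrightarrow>
     (\<exists>s t. s \<in> sg_comp deg \<alpha> \<and> t \<in> sg_comp deg \<beta> \<and> s * t = v)"
proof (induction rule: add_span.induct)
  case zero
  then show ?case by simp
next
  case (prod x y)
  then obtain s t where "x s \<noteq> 0" "y t \<noteq> 0" "s * t = v" using csr_mult_nz[of "(*)" 0 x y v] by auto
  then show ?case using prod.hyps by (auto simp: AS_comp_def)
next
  case (add a b)
  then show ?case by (cases "a v = 0") (auto simp: csr_add_def)
qed

lemma comp_in_span_aux:
  assumes sg: "strongly_graded_semigroup deg"
  shows "finite F \<Longrightarrow> \<forall>f. f \<in> AS_comp deg (\<alpha> + \<beta>) \<and> {s. f s \<noteq> 0} \<subseteq> F \<longrightarrow>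
     (f :: 's::{semigroup_mult,mult_zero} \<Rightarrow> 'a::ring_1) \<in> add_span csr_add AS_mult (\<lambda>_. 0) (AS_comp deg \<alpha>) (AS_comp deg \<beta>)"
proof (induction F rule: finite_induct)
  case empty
  show ?case
  proof (intro allI impI)
    fix f :: "'s \<Rightarrow> 'a" assume "f \<in> AS_comp deg (\<alpha> + \<beta>) \<and> {s. f s \<noteq> 0} \<subseteq> {}"
    then have "f = (\<lambda>_. 0)" by auto
    then show "f \<in> add_span csr_add AS_mult (\<lambda>_. 0) (AS_comp deg \<alpha>) (AS_comp deg \<beta>)"
      using add_span.zero by metis
  qed
next
  case (insert u F)
  show ?case
  proof (intro allI impI)
    fix f :: "'s \<Rightarrow> 'a" assume hf: "f \<in> AS_comp deg (\<alpha> + \<beta>) \<and> {s. f s \<noteq> 0} \<subseteq> insert u F"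
    define f1 where "f1 = f(u := 0)"
    define f2 where "f2 = (\<lambda>v. if v = u then f u else 0)"
    have dec: "f = csr_add f1 f2" by (auto simp: f1_def f2_def csr_add_def)
    have "f1 \<in> AS_comp deg (\<alpha> + \<beta>)"
    proof -
      have "{s. f1 s \<noteq> 0} \<subseteq> {s. f s \<noteq> 0}" by (auto simp: f1_def)
      then have "finite {s. f1 s \<noteq> 0}" using hf by (auto simp: AS_comp_def csr_carrier_def intro: finite_subset)
      then show ?thesis using hf by (auto simp: AS_comp_def csr_carrier_def f1_def)
    qed
    moreover have "{s. f1 s \<noteq> 0} \<subseteq> F" using hf by (auto simp: f1_def)
    ultimately have s1: "f1 \<in> add_span csr_add AS_mult (\<lambda>_. 0) (AS_comp deg \<alpha>) (AS_comp deg \<beta>)"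
      using insert.IH by blast
    have s2: "f2 \<in> add_span csr_add AS_mult (\<lambda>_. 0) (AS_comp deg \<alpha>) (AS_comp deg \<beta>)"
    proof (cases "f u = 0")
      case True
      then have "f2 = (\<lambda>_. 0)" by (auto simp: f2_def)
      then show ?thesis using add_span.zero by metis
    next
      case False
      then have u0: "u \<noteq> 0" and du: "deg u = \<alpha> + \<beta>"
        using hf by (auto simp: AS_comp_def csr_carrier_def sg_comp_def)
      then have "u \<in> sg_comp deg (\<alpha> + \<beta>)" by (simp add: sg_comp_def)
      then have "u \<in> set_mult (sg_comp deg \<alpha>) (sg_comp deg \<beta>)" using sg by (simp add: strongly_graded_semigroup_def)
      then obtain s t where st: "s \<in> sg_comp deg \<alpha>" "t \<in> sg_comp deg \<beta>" "u = s * t" by (auto simp: set_mult_def)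
      have s0: "s \<noteq> 0" using st u0 by auto
      have t0: "t \<noteq> 0" using st u0 by auto
      define a1 where "a1 = (\<lambda>v. if v = s then f u else (0::'a))"
      have a1c: "a1 \<in> AS_comp deg \<alpha>"
      proof -
        have "{v. a1 v \<noteq> 0} \<subseteq> {s}" by (auto simp: a1_def)
        then have "finite {v. a1 v \<noteq> 0}" by (rule finite_subset) simp
        then show ?thesis using s0 st by (auto simp: AS_comp_def csr_carrier_def a1_def)
      qed
      have a2c: "(csr_basis t :: 's \<Rightarrow> 'a) \<in> AS_comp deg \<beta>"
      proof -
        have "{v. (csr_basis t :: 's \<Rightarrow> 'a) v \<noteq> 0} \<subseteq> {t}" by (auto simp: csr_basis_def)
        then have "finite {v. (csr_basis t :: 's \<Rightarrow> 'a) v \<noteq> 0}" by (rule finite_subset) simp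
        then show ?thesis using t0 st by (auto simp: AS_comp_def csr_carrier_def csr_basis_def)
      qed
      have "f2 = AS_mult a1 (csr_basis t)"
      proof
        fix v
        show "f2 v = AS_mult a1 (csr_basis t) v"
        proof (cases "v = 0")
          case True
          then show ?thesis using u0 by (simp add: f2_def csr_mult_def)
        next
          case False
          have "AS_mult a1 (csr_basis t) v = (\<Sum>s'\<in>{s}. \<Sum>t'\<in>{t}. if s' * t' = v then a1 s' * csr_basis t t' else 0)"
            by (rule csr_mult_eq) (use False in \<open>auto simp: a1_def csr_basis_def split: if_splits\<close>)
          then show ?thesis using st by (auto simp: f2_def a1_def csr_basis_def)
        qed
      qed
      then show ?thesis using add_span.prod[OF a1c a2c] by simp
    qed
    show "f \<in> add_span csr_add AS_mult (\<lambda>_. 0) (AS_comp deg \<alpha>) (AS_comp deg \<beta>)"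
      using add_span.add[OF s1 s2] dec by simp
  qed
qed

lemma part1:
  fixes deg :: "'s::{semigroup_mult,mult_zero} \<Rightarrow> 'g::group_add"
  assumes graded: "graded_semigroup deg" and one: "(1::'a::ring_1) \<noteq> 0"
  shows "strongly_graded_semigroup deg \<longleftrightarrow>
           strongly_graded_ring csr_add (AS_mult :: ('s \<Rightarrow> 'a) \<Rightarrow> _) (\<lambda>_. 0) (AS_comp deg)"
proof
  assume sg: "strongly_graded_semigroup deg"
  show "strongly_graded_ring csr_add (AS_mult :: ('s \<Rightarrow> 'a) \<Rightarrow> _) (\<lambda>_. 0) (AS_comp deg)"
    unfolding strongly_graded_ring_def
  proof (intro allI equalityI subsetI)
    fix \<alpha> \<beta> x
    assume "x \<in> add_span csr_add (AS_mult :: ('s \<Rightarrow> 'a) \<Rightarrow> _) (\<lambda>_. 0) (AS_comp deg \<alpha>) (AS_comp deg \<beta>)"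
    then show "x \<in> AS_comp deg (\<alpha> + \<beta>)" using span_sub[OF graded] by blast
  next
    fix \<alpha> \<beta> and x :: "'s \<Rightarrow> 'a"
    assume x: "x \<in> AS_comp deg (\<alpha> + \<beta>)"
    then have "finite {s. x s \<noteq> 0}" by (simp add: AS_comp_def csr_carrier_def)
    then show "x \<in> add_span csr_add AS_mult (\<lambda>_. 0) (AS_comp deg \<alpha>) (AS_comp deg \<beta>)"
      using comp_in_span_aux[OF sg, of "{s. x s \<noteq> 0}" \<alpha> \<beta>] x by blast
  qed
next
  assume sr: "strongly_graded_ring csr_add (AS_mult :: ('s \<Rightarrow> 'a) \<Rightarrow> _) (\<lambda>_. 0) (AS_comp deg)"
  show "strongly_graded_semigroup deg"
    unfolding strongly_graded_semigroup_def
  proof (intro allI equalityI subsetI)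
    fix \<alpha> \<beta> x
    assume "x \<in> set_mult (sg_comp deg \<alpha>) (sg_comp deg \<beta>)"
    then obtain s t where "s \<in> sg_comp deg \<alpha>" "t \<in> sg_comp deg \<beta>" "x = s * t" by (auto simp: set_mult_def)
    then show "x \<in> sg_comp deg (\<alpha> + \<beta>)" using graded by (auto simp: sg_comp_def graded_semigroup_def)
  next
    fix \<alpha> \<beta> u
    assume u: "u \<in> sg_comp deg (\<alpha> + \<beta>)"
    show "u \<in> set_mult (sg_comp deg \<alpha>) (sg_comp deg \<beta>)"
    proof (cases "u = 0")
      case True
      have "(0::'s) \<in> sg_comp deg \<alpha>" "(0::'s) \<in> sg_comp deg \<beta>" by (auto simp: sg_comp_def)
      then show ?thesis using True unfolding set_mult_def by force
    next
      case False
      have b: "(csr_basis u :: 's \<Rightarrow> 'a) \<in> AS_comp deg (\<alpha> + \<beta>)"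
      proof -
        have "{v. (csr_basis u :: 's \<Rightarrow> 'a) v \<noteq> 0} \<subseteq> {u}" by (auto simp: csr_basis_def)
        then have "finite {v. (csr_basis u :: 's \<Rightarrow> 'a) v \<noteq> 0}" by (rule finite_subset) simp
        then show ?thesis using False u by (auto simp: AS_comp_def csr_carrier_def csr_basis_def)
      qed
      then have "(csr_basis u :: 's \<Rightarrow> 'a) \<in> add_span csr_add AS_mult (\<lambda>_. 0) (AS_comp deg \<alpha>) (AS_comp deg \<beta>)"
        using sr by (simp add: strongly_graded_ring_def)
      moreover have "(csr_basis u :: 's \<Rightarrow> 'a) u \<noteq> 0" using one by (simp add: csr_basis_def)
      ultimately obtain s t where "s \<in> sg_comp deg \<alpha>" "t \<in> sg_comp deg \<beta>" "s * t = u"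
        using span_witness[of "csr_basis u :: 's \<Rightarrow> 'a" deg \<alpha> \<beta> u] by blast
      then show ?thesis unfolding set_mult_def by blast
    qed
  qed
qed


definition phi :: "(('s::{semigroup_mult,mult_zero} \<times> 'g) option \<Rightarrow> 'a::zero) \<Rightarrow> 'g \<Rightarrow> 's \<Rightarrow> 'a" where
  "phi f = (\<lambda>\<alpha> s. if s \<noteq> 0 then f (Some (s, \<alpha>)) else 0)"

definition psi :: "('g \<Rightarrow> 's::{semigroup_mult,mult_zero} \<Rightarrow> 'a::zero) \<Rightarrow> ('s \<times> 'g) option \<Rightarrow> 'a" where
  "psi x = (\<lambda>w. case w of None \<Rightarrow> 0 | Some (s, \<alpha>) \<Rightarrow> if s \<noteq> 0 then x \<alpha> s else 0)"

lemma dom_iff: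
  "f \<in> csr_carrier (smash_sg_carrier :: ('s::{semigroup_mult,mult_zero} \<times> 'g) option set) None \<longleftrightarrow>
   finite {x. f x \<noteq> 0} \<and> (\<forall>x. f x \<noteq> 0 \<longrightarrow> (\<exists>s \<alpha>. x = Some (s, \<alpha>) \<and> s \<noteq> 0))"
  unfolding csr_carrier_def smash_sg_carrier_def by auto

lemma dom_P_finite:
  assumes "f \<in> csr_carrier (smash_sg_carrier :: ('s::{semigroup_mult,mult_zero} \<times> 'g) option set) None"
  shows "finite {p. f (Some p) \<noteq> 0}"
proof -
  have "Some ` {p. f (Some p) \<noteq> 0} \<subseteq> {x. f x \<noteq> 0}" by auto
  then have "finite (Some ` {p. f (Some p) \<noteq> 0})" using assms by (auto simp: dom_iff intro: finite_subset)
  then show ?thesis by (rule finite_imageD) simp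
qed

lemma phi_in:
  assumes f: "f \<in> csr_carrier (smash_sg_carrier :: ('s::{semigroup_mult,mult_zero} \<times> 'g) option set) None"
  shows "(phi f :: 'g \<Rightarrow> 's \<Rightarrow> 'a::ring_1) \<in> rsmash_carrier AS_carrier"
proof -
  define P where "P = {p. f (Some p) \<noteq> 0}"
  have P: "finite P" using dom_P_finite[OF f] by (simp add: P_def)
  have "{\<alpha>. phi f \<alpha> \<noteq> (\<lambda>_. 0)} \<subseteq> snd ` P"
  proof
    fix \<alpha> assume "\<alpha> \<in> {\<alpha>. phi f \<alpha> \<noteq> (\<lambda>_. 0)}"
    then obtain s where "phi f \<alpha> s \<noteq> 0" by auto
    then have "(s, \<alpha>) \<in> P" by (auto simp: phi_def P_def split: if_splits)
    then show "\<alpha> \<in> snd ` P" by force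
  qed
  then have fin: "finite {\<alpha>. phi f \<alpha> \<noteq> (\<lambda>_. 0)}" using P by (auto intro: finite_subset)
  have "phi f \<alpha> \<in> AS_carrier" for \<alpha>
  proof -
    have "{s. phi f \<alpha> s \<noteq> 0} \<subseteq> fst ` P"
    proof
      fix s assume "s \<in> {s. phi f \<alpha> s \<noteq> 0}"
      then have "(s, \<alpha>) \<in> P" by (auto simp: phi_def P_def split: if_splits)
      then show "s \<in> fst ` P" by force
    qed
    then have "finite {s. phi f \<alpha> s \<noteq> 0}" using P by (auto intro: finite_subset)
    then show ?thesis by (auto simp: csr_carrier_def phi_def)
  qed
  then show ?thesis using fin by (simp add: rsmash_carrier_def)
qed

lemma psi_in:
  assumes x: "(x :: 'g \<Rightarrow> 's::{semigroup_mult,mult_zero} \<Rightarrow> 'a::ring_1) \<in> rsmash_carrier AS_carrier"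
  shows "psi x \<in> csr_carrier (smash_sg_carrier :: ('s \<times> 'g) option set) None"
proof -
  define A where "A = {\<alpha>. x \<alpha> \<noteq> (\<lambda>_. 0)}"
  have A: "finite A" using x by (simp add: rsmash_carrier_def A_def)
  have B: "finite {s. x \<alpha> s \<noteq> 0}" for \<alpha> using x by (simp add: rsmash_carrier_def csr_carrier_def)
  have "{w. psi x w \<noteq> 0} \<subseteq> (\<lambda>(\<alpha>, s). Some (s, \<alpha>)) ` (SIGMA \<alpha>:A. {s. x \<alpha> s \<noteq> 0})"
  proof
    fix w assume "w \<in> {w. psi x w \<noteq> 0}"
    then obtain s \<alpha> where o: "w = Some (s, \<alpha>)" "x \<alpha> s \<noteq> 0"
      by (auto simp: psi_def split: option.splits if_splits)
    then have "\<alpha> \<in> A" by (auto simp: A_def)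
    then show "w \<in> (\<lambda>(\<alpha>, s). Some (s, \<alpha>)) ` (SIGMA \<alpha>:A. {s. x \<alpha> s \<noteq> 0})" using o by force
  qed
  then have "finite {w. psi x w \<noteq> 0}" using A B by (auto intro: finite_subset)
  then show ?thesis by (auto simp: dom_iff psi_def split: option.splits if_splits)
qed

lemma phi_psi:
  assumes x: "(x :: 'g \<Rightarrow> 's::{semigroup_mult,mult_zero} \<Rightarrow> 'a::ring_1) \<in> rsmash_carrier AS_carrier"
  shows "phi (psi x) = x"
proof (intro ext)
  fix \<alpha> s
  have "x \<alpha> 0 = 0" using x by (auto simp: rsmash_carrier_def csr_carrier_def)
  then show "phi (psi x) \<alpha> s = x \<alpha> s" by (auto simp: phi_def psi_def)
qed

lemma phi_inj:
  "inj_on (phi :: _ \<Rightarrow> 'g \<Rightarrow> 's::{semigroup_mult,mult_zero} \<Rightarrow> 'a::ring_1)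
     (csr_carrier (smash_sg_carrier :: ('s \<times> 'g) option set) None)"
proof (rule inj_onI)
  fix f g :: "('s \<times> 'g) option \<Rightarrow> 'a"
  assume f: "f \<in> csr_carrier smash_sg_carrier None" and g: "g \<in> csr_carrier smash_sg_carrier None"
    and e: "phi f = phi g"
  show "f = g"
  proof
    fix w show "f w = g w"
    proof (cases w)
      case None
      then show ?thesis using f g by (metis dom_iff option.distinct(1))
    next
      case (Some p)
      then obtain s \<alpha> where o: "w = Some (s, \<alpha>)" by (cases p) auto
      show ?thesis
      proof (cases "s = 0")
        case True
        then show ?thesis using f g o by (metis dom_iff option.inject prod.inject)
      next
        case False
        have "phi f \<alpha> s = phi g \<alpha> s" using e by simp
        then show ?thesis using False o by (simp add: phi_def)
      qed
    qed
  qed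
qed


lemma sum_times_split: "(\<Sum>p\<in>A \<times> B. h p) = (\<Sum>a\<in>A. \<Sum>b\<in>B. h (a, b))"
  by (simp add: sum.cartesian_product)

lemma phi_mult:
  fixes deg :: "'s::{semigroup_mult,mult_zero} \<Rightarrow> 'g::group_add"
  assumes f: "f \<in> csr_carrier (smash_sg_carrier :: ('s \<times> 'g) option set) None"
    and g: "g \<in> csr_carrier (smash_sg_carrier :: ('s \<times> 'g) option set) None"
  shows "(phi (csr_mult (smash_sg_mult deg) None f g) :: 'g \<Rightarrow> 's \<Rightarrow> 'a::ring_1)
     = rsmash_mult AS_mult (AS_hcomp deg) (phi f) (phi g)"
proof (intro ext)
  fix \<beta> u
  show "phi (csr_mult (smash_sg_mult deg) None f g) \<beta> u = rsmash_mult AS_mult (AS_hcomp deg) (phi f) (phi g) \<beta> u"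
  proof (cases "u = 0")
    case True
    then show ?thesis by (simp add: phi_def rsmash_mult_def csr_mult_def)
  next
    case u0: False
    define P where "P = {p. f (Some p) \<noteq> 0}"
    define Q where "Q = {p. g (Some p) \<noteq> 0}"
    have P: "finite P" using dom_P_finite[OF f] by (simp add: P_def)
    have Q: "finite Q" using dom_P_finite[OF g] by (simp add: Q_def)
    define Sf where "Sf = fst ` P"
    define Af where "Af = snd ` P"
    define Sg where "Sg = fst ` Q"
    define Ag where "Ag = insert \<beta> (snd ` Q)"
    have fin: "finite Sf" "finite Af" "finite Sg" "finite Ag"
      using P Q by (auto simp: Sf_def Af_def Sg_def Ag_def)
    have fsupp: "f x \<noteq> 0 \<Longrightarrow> x \<in> Some ` (Sf \<times> Af)" for x
    proof -
      assume h: "f x \<noteq> 0"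
      then obtain s \<alpha> where x: "x = Some (s, \<alpha>)" using f by (auto simp: dom_iff)
      then have "(s, \<alpha>) \<in> P" using h by (simp add: P_def)
      then show ?thesis using x by (force simp: Sf_def Af_def)
    qed
    have gsupp: "g x \<noteq> 0 \<Longrightarrow> x \<in> Some ` (Sg \<times> Ag)" for x
    proof -
      assume h: "g x \<noteq> 0"
      then obtain s \<alpha> where x: "x = Some (s, \<alpha>)" using g by (auto simp: dom_iff)
      then have "(s, \<alpha>) \<in> Q" using h by (simp add: Q_def)
      then show ?thesis using x by (force simp: Sg_def Ag_def)
    qed
    define T where "T = (\<lambda>s \<alpha> t. if s * t = u \<and> t \<in> sg_comp deg (\<alpha> - \<beta>)
                                then f (Some (s, \<alpha>)) * g (Some (t, \<beta>)) else (0::'a))"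
    have "phi (csr_mult (smash_sg_mult deg) None f g) \<beta> u = csr_mult (smash_sg_mult deg) None f g (Some (u, \<beta>))"
      using u0 by (simp add: phi_def)
    also have "\<dots> = (\<Sum>x\<in>Some ` (Sf \<times> Af). \<Sum>y\<in>Some ` (Sg \<times> Ag).
        if smash_sg_mult deg x y = Some (u, \<beta>) then f x * g y else 0)"
      by (rule csr_mult_eq) (use fin fsupp gsupp in auto)
    also have "\<dots> = (\<Sum>p\<in>Sf \<times> Af. \<Sum>q\<in>Sg \<times> Ag.
        if smash_sg_mult deg (Some p) (Some q) = Some (u, \<beta>) then f (Some p) * g (Some q) else 0)"
      by (simp add: sum.reindex)
    also have "\<dots> = (\<Sum>s\<in>Sf. \<Sum>\<alpha>\<in>Af. \<Sum>t\<in>Sg. \<Sum>\<gamma>\<in>Ag.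
        if smash_sg_mult deg (Some (s, \<alpha>)) (Some (t, \<gamma>)) = Some (u, \<beta>)
        then f (Some (s, \<alpha>)) * g (Some (t, \<gamma>)) else 0)"
      by (simp only: sum_times_split)
    also have "\<dots> = (\<Sum>s\<in>Sf. \<Sum>\<alpha>\<in>Af. \<Sum>t\<in>Sg. \<Sum>\<gamma>\<in>Ag. if \<gamma> = \<beta> then T s \<alpha> t else 0)"
      by (intro sum.cong refl) (use u0 in \<open>auto simp: smash_sg_mult_def T_def\<close>)
    also have "\<dots> = (\<Sum>s\<in>Sf. \<Sum>\<alpha>\<in>Af. \<Sum>t\<in>Sg. T s \<alpha> t)"
      using fin by (simp add: Ag_def)
    also have "\<dots> = (\<Sum>\<alpha>\<in>Af. \<Sum>s\<in>Sf. \<Sum>t\<in>Sg. T s \<alpha> t)"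
      by (rule sum.swap)
    finally have L: "phi (csr_mult (smash_sg_mult deg) None f g) \<beta> u = (\<Sum>\<alpha>\<in>Af. \<Sum>s\<in>Sf. \<Sum>t\<in>Sg. T s \<alpha> t)" .
    have phif: "phi f \<alpha> s \<noteq> 0 \<Longrightarrow> s \<in> Sf \<and> \<alpha> \<in> Af" for \<alpha> s
      using fsupp[of "Some (s, \<alpha>)"] by (auto simp: phi_def split: if_splits)
    have phig: "AS_hcomp deg \<gamma> (phi g \<beta>) t \<noteq> 0 \<Longrightarrow> t \<in> Sg" for \<gamma> t
      using gsupp[of "Some (t, \<beta>)"] by (auto simp: phi_def AS_hcomp_def split: if_splits)
    have "rsmash_mult AS_mult (AS_hcomp deg) (phi f) (phi g) \<beta> u =
        (\<Sum>\<alpha>\<in>{\<alpha>. phi f \<alpha> \<noteq> (\<lambda>_. 0)}. AS_mult (phi f \<alpha>) (AS_hcomp deg (\<alpha> - \<beta>) (phi g \<beta>)) u)"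
      by (simp add: rsmash_mult_def)
    also have "\<dots> = (\<Sum>\<alpha>\<in>Af. AS_mult (phi f \<alpha>) (AS_hcomp deg (\<alpha> - \<beta>) (phi g \<beta>)) u)"
    proof (rule sum.mono_neutral_left)
      show "finite Af" by (rule fin)
      show "{\<alpha>. phi f \<alpha> \<noteq> (\<lambda>_. 0)} \<subseteq> Af" using phif by fastforce
      show "\<forall>\<alpha>\<in>Af - {\<alpha>. phi f \<alpha> \<noteq> (\<lambda>_. 0)}. AS_mult (phi f \<alpha>) (AS_hcomp deg (\<alpha> - \<beta>) (phi g \<beta>)) u = 0"
        using csr_mult_nz by fastforce
    qed
    also have "\<dots> = (\<Sum>\<alpha>\<in>Af. \<Sum>s\<in>Sf. \<Sum>t\<in>Sg. if s * t = u then phi f \<alpha> s * AS_hcomp deg (\<alpha> - \<beta>) (phi g \<beta>) t else 0)"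
      by (intro sum.cong refl csr_mult_eq) (use u0 fin phif phig in auto)
    also have "\<dots> = (\<Sum>\<alpha>\<in>Af. \<Sum>s\<in>Sf. \<Sum>t\<in>Sg. T s \<alpha> t)"
    proof (intro sum.cong refl)
      fix \<alpha> s t
      show "(if s * t = u then phi f \<alpha> s * AS_hcomp deg (\<alpha> - \<beta>) (phi g \<beta>) t else 0) = T s \<alpha> t"
      proof (cases "s * t = u")
        case True
        then have "s \<noteq> 0" "t \<noteq> 0" using u0 by auto
        then show ?thesis using True by (simp add: T_def phi_def AS_hcomp_def sg_comp_def)
      next
        case False
        then show ?thesis by (simp add: T_def)
      qed
    qed
    finally show ?thesis using L by simp
  qed
qed

theorem proposition7p2:
  fixes deg :: "'s::{semigroup_mult,mult_zero} \<Rightarrow> 'g::group_add"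
  assumes graded: "graded_semigroup deg"
  shows "((1::'a::ring_1) \<noteq> 0 \<longrightarrow> (strongly_graded_semigroup deg \<longleftrightarrow>
           strongly_graded_ring csr_add (AS_mult :: ('s \<Rightarrow> 'a) \<Rightarrow> _) (\<lambda>_. 0) (AS_comp deg)))
       \<and> (\<exists>\<phi> :: (('s \<times> 'g) option \<Rightarrow> 'a) \<Rightarrow> 'g \<Rightarrow> 's \<Rightarrow> 'a.
            ring_iso_betw \<phi>
              (csr_carrier smash_sg_carrier None) csr_add (csr_mult (smash_sg_mult deg) None)
              (rsmash_carrier AS_carrier) rsmash_add (rsmash_mult AS_mult (AS_hcomp deg))
          \<and> (\<forall>s \<alpha>. s \<noteq> 0 \<longrightarrow>
               \<phi> (csr_basis (Some (s, \<alpha>))) = rsmash_single \<alpha> (csr_basis s)))"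
proof (intro conjI impI)
  assume "(1::'a) \<noteq> 0"
  then show "strongly_graded_semigroup deg \<longleftrightarrow>
           strongly_graded_ring csr_add (AS_mult :: ('s \<Rightarrow> 'a) \<Rightarrow> _) (\<lambda>_. 0) (AS_comp deg)"
    using part1[OF graded] by blast
next
  have bij: "bij_betw (phi :: _ \<Rightarrow> 'g \<Rightarrow> 's \<Rightarrow> 'a) (csr_carrier smash_sg_carrier None) (rsmash_carrier AS_carrier)"
    unfolding bij_betw_def
  proof (intro conjI phi_inj equalityI subsetI)
    fix y :: "'g \<Rightarrow> 's \<Rightarrow> 'a" assume "y \<in> phi ` csr_carrier (smash_sg_carrier :: ('s \<times> 'g) option set) None"
    then show "y \<in> (rsmash_carrier AS_carrier :: ('g \<Rightarrow> 's \<Rightarrow> 'a) set)" using phi_in by blast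
  next
    fix y :: "'g \<Rightarrow> 's \<Rightarrow> 'a" assume y: "y \<in> rsmash_carrier AS_carrier"
    then have "y = phi (psi y)" using phi_psi by metis
    then show "y \<in> phi ` csr_carrier (smash_sg_carrier :: ('s \<times> 'g) option set) None"
      using psi_in[OF y] by blast
  qed
  have hom: "\<forall>x\<in>csr_carrier smash_sg_carrier None. \<forall>y\<in>csr_carrier smash_sg_carrier None.
      (phi :: _ \<Rightarrow> 'g \<Rightarrow> 's \<Rightarrow> 'a) (csr_add x y) = rsmash_add (phi x) (phi y) \<and>
      phi (csr_mult (smash_sg_mult deg) None x y) = rsmash_mult AS_mult (AS_hcomp deg) (phi x) (phi y)"
  proof (intro ballI conjI)
    fix x y :: "('s \<times> 'g) option \<Rightarrow> 'a"
    show "phi (csr_add x y) = rsmash_add (phi x) (phi y)"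
      by (intro ext) (simp add: phi_def csr_add_def rsmash_add_def)
    assume "x \<in> csr_carrier smash_sg_carrier None" "y \<in> csr_carrier smash_sg_carrier None"
    then show "phi (csr_mult (smash_sg_mult deg) None x y) = rsmash_mult AS_mult (AS_hcomp deg) (phi x) (phi y)"
      by (rule phi_mult)
  qed
  have bas: "\<forall>s \<alpha>. s \<noteq> 0 \<longrightarrow>
      (phi :: _ \<Rightarrow> 'g \<Rightarrow> 's \<Rightarrow> 'a) (csr_basis (Some (s, \<alpha>))) = rsmash_single \<alpha> (csr_basis s)"
    by (auto simp: phi_def csr_basis_def rsmash_single_def fun_eq_iff)
  show "\<exists>\<phi> :: (('s \<times> 'g) option \<Rightarrow> 'a) \<Rightarrow> 'g \<Rightarrow> 's \<Rightarrow> 'a.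
            ring_iso_betw \<phi>
              (csr_carrier smash_sg_carrier None) csr_add (csr_mult (smash_sg_mult deg) None)
              (rsmash_carrier AS_carrier) rsmash_add (rsmash_mult AS_mult (AS_hcomp deg))
          \<and> (\<forall>s \<alpha>. s \<noteq> 0 \<longrightarrow>
               \<phi> (csr_basis (Some (s, \<alpha>))) = rsmash_single \<alpha> (csr_basis s))"
    using bij hom bas unfolding ring_iso_betw_def by blast
qed

end
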